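(* Assume $\chi=\chi_1\chi_2^{-1}$ is weakly generic. Let $\sigma=\sigma_{a,b}\in W^{\exp}(\chi_1\oplus\chi_2)$ be such that $\mathcal{S}(\chi_1,\chi_2,\sigma)$ is non-empty, and let $(J,x)$ be its unique maximal element. Define $c_\tau=n_\tau+e-1-2x_\tau$ for $\tau\in\Sigma$ (so $c_\tau\in[1,p-1]$) and $r=r(J,c)$. Then $a_\tau-b_\tau+1=r_\tau$ for all $\tau$, except in the following two cases: (i) $J=\Sigma$, $n_\tau=e$ and $x_\tau=e-1$ for all $\tau$; (ii) $J=\varnothing$, $n_\tau=p-1-e$ and $x_\tau=0$ for all $\tau$. In cases (i) and (ii) there is the additional possibility that $a_\tau-b_\tau+1=p$ for all $\tau$ (and otherwise $a_\tau-b_\tau+1=r_\tau$ for all $\tau$). Furthermore, $r(J,c)$ is independent of the choice of $\tau_0$ in its definition.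
   Context: Let $p$ be a prime and $K/\mathbf{Q}_p$ finite with residue field $k$, residue degree $f$ and ramification index $e$; $I_K$ is the inertia subgroup of $G_K$. Fix a uniformiser $\pi$ and $\varpi\in\overline{K}$ with $\varpi^{p^f-1}=\pi$; $\omega\colon G_K\to k^\times$ sends $g$ to the reduction of $g(\varpi)/\varpi$. Let $\Sigma=\mathrm{Hom}_{\mathbf{F}_p}(k,\overline{\mathbf{F}}_p)$, $\varphi(x)=x^p$ on $k$, $\omega_\tau=\tau\circ\omega$. For $a\in\mathbf{Z}^\Sigma$, $\Omega_{\tau,a}=\sum_{i=0}^{f-1}p^ia_{\tau\circ\varphi^i}$. $\chi_1,\chi_2\colon G_K\to\overline{\mathbf{F}}_p^\times$ are continuous characters, $\chi=\chi_1\chi_2^{-1}=\psi\prod_\tau\omega_\tau^{n_\tau}$ with $\psi$ unramified, $n_\tau\in[1,p]$, some $n_\tau<p$ (this determines $n$). Weakly generic: $n_\tau\in[e,p-e]$ for all $\tau$. Serre weight $\sigma_{a,b}=\bigotimes_\tau(\det^{b_\tau}\otimes\mathrm{Sym}^{a_\tau-b_\tau}k^2)\otimes_{k,\tau}\overline{\mathbf{F}}_p$ for $a,b\in\mathbf{Z}^\Sigma$ with $a_\tau-b_\tau\in[0,p-1]$; $\sigma_{a,b}\cong\sigma_{a',b'}$ iff $a-b=a'-b'$ and $\Omega_{\tau,b}\equiv\Omega_{\tau,b'}\pmod{p^f-1}$. $W^{\exp}(\chi_1\oplus\chi_2)$: $\sigma_{a,b}$ belongs to it iff there exist $J\subseteq\Sigma$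 and $x_\tau\in[0,e-1]$ with $(\chi_1\oplus\chi_2)|_{I_K}\cong\prod_{\tau\in J}\omega_\tau^{a_\tau+1+x_\tau}\prod_{\tau\notin J}\omega_\tau^{b_\tau+x_\tau}\oplus\prod_{\tau\notin J}\omega_\tau^{a_\tau+e-x_\tau}\prod_{\tau\in J}\omega_\tau^{b_\tau+e-1-x_\tau}$. $\mathcal{S}(\chi_1,\chi_2,\sigma)$: pairs $(J,x)$, $J\subseteq\Sigma$, $x_\tau\in[0,e-1]$, with $\chi_1|_{I_K}=\prod_{\tau\in J}\omega_\tau^{a_\tau+1+x_\tau}\prod_{\tau\notin J}\omega_\tau^{b_\tau+x_\tau}$ and $\chi_2|_{I_K}=\prod_{\tau\notin J}\omega_\tau^{a_\tau+e-x_\tau}\prod_{\tau\in J}\omega_\tau^{b_\tau+e-1-x_\tau}$. With $s(J,x)_\tau=a_\tau-b_\tau+1+x_\tau$ ($\tau\in J$), $=x_\tau$ ($\tau\notin J$), order by $(J,x)\preceq(J',x')$ iff $\Omega_{\tau,s(J',x')-s(J,x)}\in(p^f-1)\mathbf{Z}_{\ge0}$ for all $\tau$; a non-empty $\mathcal{S}$ has a unique maximal element. $\delta_J$ and $r(J,c)$: for $(x,\tau)\in\mathbf{Z}^\Sigma\times\Sigma$, $y=\delta_J(x,\tau)$ equals $x$ if $1\le x_\tau\le p$; if $x_\tau\le0$ (resp. $x_\tau>p$) then $y_\tau=x_\tau+p$ (resp. $x_\tau-p$), $y_{\tau\circ\varphi}=x_{\tau\circ\varphi}-1$ if $\tau\circ\varphi\notin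 J$ and $x_{\tau\circ\varphi}+1$ if $\tau\circ\varphi\in J$, other entries unchanged. For $c_\tau\in[1,p-1]$ let $y_{0,\tau}=c_\tau$, $c_\tau+1$, $p-c_\tau$, $p-1-c_\tau$ according as ($\tau\in J,\tau\circ\varphi^{-1}\in J$), ($\tau\in J,\tau\circ\varphi^{-1}\notin J$), ($\tau\notin J,\tau\circ\varphi^{-1}\in J$), ($\tau\notin J,\tau\circ\varphi^{-1}\notin J$). If all $y_{0,\tau}>0$, $r(J,c)=y_0$; otherwise choose $\tau_0$ with $y_{0,\tau_0}=0$, put $y_\kappa=\delta_J(y_{\kappa-1},\tau_0\circ\varphi^{\kappa-1})$ for $\kappa=1,\dots,f$, and $r(J,c)=y_f$. *)

theory Defs
  imports "HOL-Number_Theory.Cong"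
begin

(* Conventions: Sigma = Hom(k, Fpbar) is indexed by {0..<f} via i |-> tau_0 o phi^i for a
   fixed embedding tau_0.  Thus tau o phi has index (i+1) mod f and tau o phi^{-1} has index
   (i+f-1) mod f.  Vectors in Z^Sigma are functions nat => int (only values on {0..<f} matter).
   Restrictions of the characters to inertia are recorded by exponents k1, k2 with
   chi_j|_{I_K} = omega_{tau_0}^{k_j}; since omega_{tau_0 o phi^i} = omega_{tau_0}^(p^i) and
   omega_{tau_0}|_{I_K} has order p^f-1, prod_tau omega_tau^(m_tau) = omega_{tau_0}^(Omega_{tau_0,m})
   and equalities of such characters are congruences mod p^f - 1. *)

definition Omega :: "int \<Rightarrow> nat \<Rightarrow> (nat \<Rightarrow> int) \<Rightarrow> nat \<Rightarrow> int" where
  "Omega p f m j = (\<Sum>i<f. p ^ i * m ((j + i) mod f))"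

definition expA :: "int \<Rightarrow> nat \<Rightarrow> nat set \<Rightarrow> (nat \<Rightarrow> int) \<Rightarrow> (nat \<Rightarrow> int) \<Rightarrow> (nat \<Rightarrow> int) \<Rightarrow> int" where
  "expA p f J x a b = Omega p f (\<lambda>i. if i \<in> J then a i + 1 + x i else b i + x i) 0"

definition expB :: "int \<Rightarrow> nat \<Rightarrow> nat \<Rightarrow> nat set \<Rightarrow> (nat \<Rightarrow> int) \<Rightarrow> (nat \<Rightarrow> int) \<Rightarrow> (nat \<Rightarrow> int) \<Rightarrow> int" where
  "expB p f e J x a b = Omega p f (\<lambda>i. if i \<notin> J then a i + int e - x i else b i + int e - 1 - x i) 0"

definition x_ok :: "nat \<Rightarrow> nat \<Rightarrow> (nat \<Rightarrow> int) \<Rightarrow> bool" where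
  "x_ok e f x \<longleftrightarrow> (\<forall>i<f. 0 \<le> x i \<and> x i \<le> int e - 1) \<and> (\<forall>i\<ge>f. x i = 0)"

(* sigma_{a,b} \<in> W^exp(chi_1 \<oplus> chi_2): isomorphism of semisimple 2-dim reps of I_K
   = equality of the multisets of characters *)
definition in_Wexp :: "int \<Rightarrow> nat \<Rightarrow> nat \<Rightarrow> int \<Rightarrow> int \<Rightarrow> (nat \<Rightarrow> int) \<Rightarrow> (nat \<Rightarrow> int) \<Rightarrow> bool" where
  "in_Wexp p f e k1 k2 a b \<longleftrightarrow>
     (\<exists>J x. J \<subseteq> {..<f} \<and> x_ok e f x \<and>
        (([k1 = expA p f J x a b] (mod p ^ f - 1) \<and> [k2 = expB p f e J x a b] (mod p ^ f - 1)) \<or>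
         ([k1 = expB p f e J x a b] (mod p ^ f - 1) \<and> [k2 = expA p f J x a b] (mod p ^ f - 1))))"

definition S_set :: "int \<Rightarrow> nat \<Rightarrow> nat \<Rightarrow> int \<Rightarrow> int \<Rightarrow> (nat \<Rightarrow> int) \<Rightarrow> (nat \<Rightarrow> int)
                     \<Rightarrow> (nat set \<times> (nat \<Rightarrow> int)) set" where
  "S_set p f e k1 k2 a b =
     {(J, x). J \<subseteq> {..<f} \<and> x_ok e f x \<and>
        [k1 = expA p f J x a b] (mod p ^ f - 1) \<and> [k2 = expB p f e J x a b] (mod p ^ f - 1)}"

definition s_vec :: "(nat \<Rightarrow> int) \<Rightarrow> (nat \<Rightarrow> int) \<Rightarrow> nat set \<Rightarrow> (nat \<Rightarrow> int) \<Rightarrow> nat \<Rightarrow> int" where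
  "s_vec a b J x i = (if i \<in> J then a i - b i + 1 + x i else x i)"

definition preceq :: "int \<Rightarrow> nat \<Rightarrow> (nat \<Rightarrow> int) \<Rightarrow> (nat \<Rightarrow> int)
                      \<Rightarrow> nat set \<times> (nat \<Rightarrow> int) \<Rightarrow> nat set \<times> (nat \<Rightarrow> int) \<Rightarrow> bool" where
  "preceq p f a b Jx Jx' \<longleftrightarrow>
     (\<forall>j<f. let d = Omega p f (\<lambda>i. s_vec a b (fst Jx') (snd Jx') i - s_vec a b (fst Jx) (snd Jx) i) j
            in 0 \<le> d \<and> (p ^ f - 1) dvd d)"

definition delta :: "int \<Rightarrow> nat \<Rightarrow> nat set \<Rightarrow> (nat \<Rightarrow> int) \<Rightarrow> nat \<Rightarrow> (nat \<Rightarrow> int)" where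
  "delta p f J y t =
     (if 1 \<le> y t \<and> y t \<le> p then y
      else let t' = Suc t mod f;
               y1 = y(t := (if y t \<le> 0 then y t + p else y t - p))
           in y1(t' := (if t' \<in> J then y1 t' + 1 else y1 t' - 1)))"

definition y0 :: "int \<Rightarrow> nat \<Rightarrow> nat set \<Rightarrow> (nat \<Rightarrow> int) \<Rightarrow> nat \<Rightarrow> int" where
  "y0 p f J c i =
     (let im = (i + f - 1) mod f in
      if i \<in> J then (if im \<in> J then c i else c i + 1)
      else (if im \<in> J then p - c i else p - 1 - c i))"

primrec r_steps :: "int \<Rightarrow> nat \<Rightarrow> nat set \<Rightarrow> (nat \<Rightarrow> int) \<Rightarrow> nat \<Rightarrow> nat \<Rightarrow> (nat \<Rightarrow> int)" where
  "r_steps p f J c t0 0 = y0 p f J c"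
| "r_steps p f J c t0 (Suc k) = delta p f J (r_steps p f J c t0 k) ((t0 + k) mod f)"

definition r_fun :: "int \<Rightarrow> nat \<Rightarrow> nat set \<Rightarrow> (nat \<Rightarrow> int) \<Rightarrow> (nat \<Rightarrow> int)" where
  "r_fun p f J c =
     (if \<forall>i<f. 0 < y0 p f J c i then y0 p f J c
      else r_steps p f J c (SOME t0. t0 < f \<and> y0 p f J c t0 = 0) f)"

end

theory Submission
  imports Defs
begin


definition pr :: "nat \<Rightarrow> nat \<Rightarrow> nat" where "pr f i = (i + f - 1) mod f"
definition nx :: "nat \<Rightarrow> nat \<Rightarrow> nat" where "nx f i = Suc i mod f"

lemma pr_lt: "1 \<le> f \<Longrightarrow> pr f i < f" by (simp add: pr_def)
lemma nx_lt: "1 \<le> f \<Longrightarrow> nx f i < f" by (simp add: nx_def)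
lemma nx_pr: "i < f \<Longrightarrow> nx f (pr f i) = i"
proof -
  assume a: "i < f"
  have "nx f (pr f i) = Suc (i + f - 1) mod f" unfolding pr_def nx_def by (simp add: mod_Suc_eq)
  also have "Suc (i + f - 1) = i + f" using a by simp
  finally show ?thesis using a by simp
qed
lemma pr_nx: "i < f \<Longrightarrow> pr f (nx f i) = i"
proof -
  assume a: "i < f"
  show ?thesis
  proof (cases "Suc i < f")
    case True
    then have "pr f (nx f i) = (i + f) mod f" unfolding pr_def nx_def by simp
    then show ?thesis using a by simp
  next
    case False
    then have "Suc i = f" using a by simp
    then show ?thesis unfolding pr_def nx_def by simp
  qed
qed

lemma cyc_fwd:
  assumes "i0 < f" "P i0" "\<And>i. i < f \<Longrightarrow> P i \<Longrightarrow> P (nx f i)"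
  shows "\<forall>i<f. P i"
proof -
  have "\<forall>m. P ((i0 + m) mod f)"
  proof
    fix m show "P ((i0 + m) mod f)"
    proof (induction m)
      case 0 then show ?case using assms by simp
    next
      case (Suc m)
      have "(i0 + Suc m) mod f = nx f ((i0 + m) mod f)"
        by (simp add: nx_def mod_Suc_eq)
      then show ?case using Suc assms(1,3)
        by (metis mod_less_divisor order_le_less_trans zero_le)
    qed
  qed
  moreover have "\<And>i. i < f \<Longrightarrow> (i0 + (i + f - i0)) mod f = i"
    using assms(1) by simp
  ultimately show ?thesis by metis
qed

lemma cyc_back:
  assumes "i0 < f" "P i0" "\<And>i. i < f \<Longrightarrow> P i \<Longrightarrow> P (pr f i)"
  shows "\<forall>i<f. P i"
proof (rule ccontr)
  assume "\<not> (\<forall>i<f. P i)"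
  then obtain i1 where i1: "i1 < f" "\<not> P i1" by blast
  have "\<forall>i<f. \<not> P i"
  proof (rule cyc_fwd[where P="\<lambda>i. \<not> P i", OF i1])
    fix i assume "i < f" "\<not> P i"
    then show "\<not> P (nx f i)" using assms(3)[of "nx f i"] pr_nx[of i f] nx_lt[of f i] by auto
  qed
  then show False using assms by blast
qed



lemma Omega_cong: "1 \<le> f \<Longrightarrow> (\<And>i. i < f \<Longrightarrow> g i = h i) \<Longrightarrow> Omega p f g j = Omega p f h j"
  unfolding Omega_def by (intro sum.cong) auto

lemma Omega_add: "Omega p f (\<lambda>i. g i + h i) j = Omega p f g j + Omega p f h j"
  unfolding Omega_def by (simp add: sum.distrib algebra_simps)

lemma Omega_diff: "Omega p f (\<lambda>i. g i - h i) j = Omega p f g j - Omega p f h j"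
  unfolding Omega_def by (simp add: sum_subtractf algebra_simps)

lemma Omega_smult: "Omega p f (\<lambda>i. v * g i) j = v * Omega p f g j"
  unfolding Omega_def by (simp add: sum_distrib_left algebra_simps)

lemma Omega_rec:
  assumes f: "1 \<le> f" and j: "j < f"
  shows "p * Omega p f g (nx f j) = Omega p f g j + (p ^ f - 1) * g j"
proof -
  define F where "F = (\<lambda>i. p ^ i * g ((j + i) mod f))"
  have "Omega p f g (nx f j) = (\<Sum>i<f. p ^ i * g ((Suc j + i) mod f))"
    unfolding Omega_def nx_def by (simp add: mod_add_left_eq)
  then have "p * Omega p f g (nx f j) = (\<Sum>i<f. F (Suc i))"
    unfolding F_def by (simp add: sum_distrib_left algebra_simps)
  also have "\<dots> = (\<Sum>i<Suc f. F i) - F 0"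
  proof -
    have "(\<Sum>i<Suc f. F i) = F 0 + (\<Sum>i<f. F (Suc i))" by (rule sum.lessThan_Suc_shift)
    then show ?thesis by simp
  qed
  also have "(\<Sum>i<Suc f. F i) = Omega p f g j + F f"
    unfolding F_def Omega_def by simp
  also have "F f = p ^ f * g j" unfolding F_def using j by simp
  also have "F 0 = g j" unfolding F_def using j by simp
  finally show ?thesis by (simp add: algebra_simps)
qed

lemma pr_mod_add: "1 \<le> f \<Longrightarrow> pr f ((l + i) mod f) = (pr f l + i) mod f"
proof -
  assume f: "1 \<le> f"
  have "pr f ((l + i) mod f) = ((l + i) mod f + (f - 1)) mod f" unfolding pr_def using f by simp
  also have "\<dots> = (l + i + (f - 1)) mod f" by (simp add: mod_add_left_eq)
  also have "\<dots> = ((l + (f - 1)) mod f + i) mod f"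
  proof -
    have "((l + (f - 1)) mod f + i) mod f = (l + (f - 1) + i) mod f" by (rule mod_add_left_eq)
    then show ?thesis by (simp add: ac_simps)
  qed
  also have "\<dots> = (pr f l + i) mod f" unfolding pr_def using f by simp
  finally show ?thesis .
qed

lemma Omega_shift: "1 \<le> f \<Longrightarrow> Omega p f (\<lambda>i. g (pr f i)) l = Omega p f g (pr f l)"
proof -
  assume f: "1 \<le> f"
  show ?thesis unfolding Omega_def using pr_mod_add[OF f] by simp
qed

lemma Omega_carry:
  assumes f: "1 \<le> f" and l: "l < f"
  shows "Omega p f (\<lambda>i. p * E i - E (pr f i)) l = (p ^ f - 1) * E (pr f l)"
proof -
  have "Omega p f (\<lambda>i. p * E i - E (pr f i)) l = p * Omega p f E l - Omega p f E (pr f l)"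
    by (simp add: Omega_diff Omega_smult Omega_shift[OF f])
  also have "p * Omega p f E l = Omega p f E (pr f l) + (p ^ f - 1) * E (pr f l)"
    using Omega_rec[OF f pr_lt[OF f, of l], of p E] nx_pr[OF l] by simp
  finally show ?thesis by simp
qed

lemma coprime_p_M: "1 \<le> f \<Longrightarrow> coprime (p::int) (p ^ f - 1)"
proof -
  assume f: "1 \<le> f"
  have "coprime (p ^ f) (p ^ f - 1)" by simp
  then show ?thesis using f coprime_power_left_iff[of p f "p ^ f - 1"] by simp
qed

lemma Omega_dvd_all:
  assumes f: "1 \<le> f" and d0: "(p ^ f - 1) dvd Omega p f u 0"
  shows "\<forall>j<f. (p ^ f - 1) dvd Omega p f u j"
proof (intro allI impI)
  fix j assume "j < f"
  then show "(p ^ f - 1) dvd Omega p f u j"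
  proof (induction j)
    case 0 then show ?case using d0 by simp
  next
    case (Suc j)
    then have j: "j < f" by simp
    have nxj: "nx f j = Suc j" unfolding nx_def using Suc.prems by simp
    have "(p ^ f - 1) dvd Omega p f u j + (p ^ f - 1) * u j" using Suc j by simp
    then have "(p ^ f - 1) dvd p * Omega p f u (Suc j)" using Omega_rec[OF f j, of p u] nxj by simp
    moreover have "coprime (p ^ f - 1) p" using coprime_p_M[OF f, of p] by (simp add: ac_simps)
    ultimately show ?case using coprime_dvd_mult_right_iff by blast
  qed
qed

lemma carry_exists:
  assumes f: "1 \<le> f" and p: "2 \<le> p" and d0: "(p ^ f - 1) dvd Omega p f u 0"
  shows "\<exists>k. \<forall>i<f. u i = p * k i - k (pr f i)"
proof -
  let ?M = "p ^ f - 1"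
  have Mpos: "?M > 0"
  proof -
    have "p ^ 1 \<le> p ^ f" using f p by (intro power_increasing) auto
    then show ?thesis using p by simp
  qed
  define k where "k i = Omega p f u (nx f i) div ?M" for i
  have D: "\<forall>j<f. ?M dvd Omega p f u j" by (rule Omega_dvd_all[OF f d0])
  have K: "?M * k i = Omega p f u (nx f i)" if "i < f" for i
    unfolding k_def using D nx_lt[OF f, of i] by simp
  show ?thesis
  proof (intro exI allI impI)
    fix i assume i: "i < f"
    have "?M * k (pr f i) = Omega p f u i" using K[OF pr_lt[OF f]] nx_pr[OF i] by simp
    moreover have "p * (?M * k i) = Omega p f u i + ?M * u i" using K[OF i] Omega_rec[OF f i, of p u] by simp
    ultimately have "?M * (p * k i) = ?M * (k (pr f i) + u i)" by (simp add: algebra_simps)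
    then have "p * k i = k (pr f i) + u i" using Mpos by simp
    then show "u i = p * k i - k (pr f i)" by simp
  qed
qed



definition eps :: "nat set \<Rightarrow> nat \<Rightarrow> int" where "eps J i = (if i \<in> J then 1 else -1)"
definition k0 :: "nat set \<Rightarrow> nat \<Rightarrow> int" where "k0 J i = (if i \<in> J then 0 else -1)"

lemma eps_sq: "eps J i * eps J i = 1" unfolding eps_def by simp

lemma eps_cancel: "eps J i * u = eps J i * v \<Longrightarrow> u = v" unfolding eps_def by (auto split: if_splits)

lemma eps_solve: "R = eps J i * w \<Longrightarrow> eps J i * R = w" unfolding eps_def by auto

lemma y0_formula: "i < f \<Longrightarrow> y0 p f J c i = eps J i * (c i + p * k0 J i - k0 J (pr f i))"
  unfolding y0_def Let_def pr_def eps_def k0_def by auto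

lemma y0_zero:
  assumes "y0 p f J c t = 0" "1 \<le> c t" "c t \<le> p - 1"
  shows "t \<notin> J \<and> pr f t \<notin> J \<and> c t = p - 1"
  using assms unfolding y0_def Let_def pr_def by (auto split: if_splits)

lemma delta_same: "1 \<le> y t \<and> y t \<le> p \<Longrightarrow> delta p f J y t = y"
  unfolding delta_def by simp

lemma delta_mod:
  assumes "\<not> (1 \<le> y t \<and> y t \<le> p)" "(y t \<le> 0) = (t \<notin> J)"
  shows "delta p f J y t j = y j - (if j = t then eps J t * p else 0) + (if j = nx f t then eps J (nx f t) else 0)"
  using assms unfolding delta_def Let_def nx_def eps_def by (auto split: if_splits)

lemma phi_psi: "t0 < f \<Longrightarrow> i < f \<Longrightarrow> (t0 + (i + f - t0) mod f) mod f = i" for t0 f i :: nat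
proof -
  assume a: "t0 < f" "i < f"
  have "(t0 + (i + f - t0) mod f) mod f = (t0 + (i + f - t0)) mod f" by (rule mod_add_right_eq)
  also have "t0 + (i + f - t0) = i + f" using a by simp
  finally show ?thesis using a by simp
qed

lemma psi_phi: "t0 < f \<Longrightarrow> m < f \<Longrightarrow> ((t0 + m) mod f + f - t0) mod f = m" for t0 f m :: nat
proof -
  assume a: "t0 < f" "m < f"
  have "((t0 + m) mod f + f - t0) mod f = ((t0 + m) mod f + (f - t0)) mod f"
    using diff_add_assoc[of t0 f "(t0 + m) mod f"] a by simp
  also have "\<dots> = (t0 + m + (f - t0)) mod f" by (simp add: mod_add_left_eq)
  also have "t0 + m + (f - t0) = m + f" using a by simp
  finally show ?thesis using a by simp
qed

lemma pr_t: "1 \<le> f \<Longrightarrow> 1 \<le> m \<Longrightarrow> pr f ((t0 + m) mod f) = (t0 + (m - 1)) mod f"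
proof -
  assume f: "1 \<le> f" and m: "1 \<le> m"
  have "pr f ((t0 + m) mod f) = ((t0 + m) mod f + (f - 1)) mod f" unfolding pr_def using f by simp
  also have "\<dots> = (t0 + m + (f - 1)) mod f" by (simp add: mod_add_left_eq)
  also have "t0 + m + (f - 1) = (t0 + (m - 1)) + f" using f m by simp
  finally show ?thesis by simp
qed

lemma rsteps_main:
  fixes p :: int and k R c :: "nat \<Rightarrow> int"
  assumes f: "1 \<le> f" and p: "2 \<le> p"
   and cb: "\<forall>i<f. 1 \<le> c i \<and> c i \<le> p - 1"
   and val: "\<forall>i<f. R i = eps J i * (c i + p * k i - k (pr f i))"
   and Rb: "\<forall>i<f. 1 \<le> R i \<and> R i \<le> p"
   and kb: "\<forall>i<f. k0 J i - 1 \<le> k i \<and> k i \<le> k0 J i"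
   and t0: "t0 < f" and z: "y0 p f J c t0 = 0"
  shows "\<forall>i<f. r_steps p f J c t0 f i = R i"
proof -
  define phi where "phi i = (i + f - t0) mod f" for i
  define K where "K m i = (if phi i < m then k i else k0 J i)" for m i
  have phi_lt: "phi i < f" for i unfolding phi_def using f by simp
  have phi_t: "phi ((t0 + m) mod f) = m" if "m < f" for m
    unfolding phi_def using psi_phi[OF t0 that] .
  have phi_eq: "phi i = m \<longleftrightarrow> i = (t0 + m) mod f" if "i < f" "m < f" for i m
  proof
    assume "phi i = m"
    then show "i = (t0 + m) mod f" using phi_psi[OF t0 that(1)] unfolding phi_def by simp
  next
    assume "i = (t0 + m) mod f"
    then show "phi i = m" using phi_t[OF that(2)] by simp
  qed
  have z0: "t0 \<notin> J \<and> pr f t0 \<notin> J \<and> c t0 = p - 1" using y0_zero[OF z] cb t0 by auto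
  have kt0: "k t0 = k0 J t0 - 1"
  proof (rule ccontr)
    assume "k t0 \<noteq> k0 J t0 - 1"
    then have "k t0 = -1" using kb t0 z0 unfolding k0_def by force
    moreover have "k (pr f t0) \<le> -1" using kb pr_lt[OF f, of t0] z0 unfolding k0_def by force
    moreover have "R t0 = - (c t0 + p * k t0 - k (pr f t0))" using val t0 z0 unfolding eps_def by simp
    ultimately have "R t0 \<le> 0" using z0 by simp
    then show False using Rb t0 by force
  qed
  have inv: "\<forall>i<f. eps J i * r_steps p f J c t0 m i = c i + p * K m i - K m (pr f i)" if "m \<le> f" for m
    using that
  proof (induction m)
    case 0
    show ?case using y0_formula unfolding K_def by (simp add: eps_sq mult.assoc[symmetric])
  next
    case (Suc m)
    then have m: "m < f" by simp
    have IH: "\<forall>i<f. eps J i * r_steps p f J c t0 m i = c i + p * K m i - K m (pr f i)"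
      using Suc by simp
    define t where "t = (t0 + m) mod f"
    define y where "y = r_steps p f J c t0 m"
    have tf: "t < f" unfolding t_def using f by simp
    have step: "r_steps p f J c t0 (Suc m) = delta p f J y t" unfolding y_def t_def by simp
    have phit: "phi t = m" unfolding t_def using phi_t[OF m] .
    have Kmt: "K m t = k0 J t" unfolding K_def using phit by simp
    have Kpr: "K m (pr f t) = k (pr f t)" if "1 \<le> m"
    proof -
      have "pr f t = (t0 + (m - 1)) mod f" unfolding t_def using pr_t[OF f that] .
      then have "phi (pr f t) = m - 1" using phi_t[of "m - 1"] m by simp
      then show ?thesis unfolding K_def using that by simp
    qed
    have Ksuc: "K (Suc m) j = (if j = t then k t else K m j)" if "j < f" for j
      using phi_eq[OF that m] unfolding K_def t_def by (auto simp: less_Suc_eq)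
    have yt: "eps J t * y t = c t + p * k0 J t - K m (pr f t)"
      using IH tf Kmt unfolding y_def by simp
    have Rt: "eps J t * R t = c t + p * k t - k (pr f t)" using val tf eps_solve by blast
    show ?case
    proof (cases "k t = k0 J t")
      case True
      have m1: "1 \<le> m"
      proof (rule ccontr)
        assume "\<not> 1 \<le> m"
        then have "t = t0" unfolding t_def using t0 by simp
        then show False using True kt0 by simp
      qed
      then have "eps J t * y t = eps J t * R t" using yt Rt Kpr True by simp
      then have "y t = R t" by (rule eps_cancel)
      then have "1 \<le> y t \<and> y t \<le> p" using Rb tf by simp
      then have "r_steps p f J c t0 (Suc m) = y" using step delta_same by simp
      moreover have "K (Suc m) j = K m j" if "j < f" for j using Ksuc[OF that] True Kmt by simp
      ultimately show ?thesis using IH pr_lt[OF f] unfolding y_def by simp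
    next
      case False
      then have kt: "k t = k0 J t - 1" using kb tf by force
      have nz: "\<not> (1 \<le> y t \<and> y t \<le> p) \<and> (y t \<le> 0) = (t \<notin> J)"
      proof (cases "m = 0")
        case True
        then have "t = t0" "y t = 0" unfolding t_def y_def using t0 z by simp_all
        then show ?thesis using z0 by simp
      next
        case False
        then have "eps J t * y t = eps J t * R t + p" using yt Rt Kpr kt by (simp add: algebra_simps)
        then show ?thesis using Rb tf p unfolding eps_def by (auto split: if_splits)
      qed
      have dm: "r_steps p f J c t0 (Suc m) j = y j - (if j = t then eps J t * p else 0) + (if j = nx f t then eps J (nx f t) else 0)" for j
        using step delta_mod[of y t p J f j] nz by simp
      have Ks2: "K (Suc m) j = K m j - (if j = t then 1 else 0)" if "j < f" for j
        using Ksuc[OF that] kt Kmt by simp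
      have prnx: "pr f j = t \<longleftrightarrow> j = nx f t" if "j < f" for j
        using nx_pr[OF that] pr_nx[OF tf] by metis
      show ?thesis
      proof (intro allI impI)
        fix j assume j: "j < f"
        have e1: "eps J j * r_steps p f J c t0 (Suc m) j = eps J j * y j - (if j = t then p else 0) + (if j = nx f t then 1 else 0)"
        proof -
          have "eps J j * r_steps p f J c t0 (Suc m) j = eps J j * y j - eps J j * (if j = t then eps J t * p else 0) + eps J j * (if j = nx f t then eps J (nx f t) else 0)"
            using dm[of j] by (simp only: distrib_left right_diff_distrib)
          moreover have "eps J j * (if j = t then eps J t * p else 0) = (if j = t then p else 0)"
            unfolding eps_def by auto
          moreover have "eps J j * (if j = nx f t then eps J (nx f t) else 0) = (if j = nx f t then 1 else 0)"
            unfolding eps_def by auto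
          ultimately show ?thesis by simp
        qed
        have e2: "K (Suc m) (pr f j) = K m (pr f j) - (if j = nx f t then 1 else 0)"
          using Ks2[OF pr_lt[OF f, of j]] prnx[OF j] by simp
        show "eps J j * r_steps p f J c t0 (Suc m) j = c j + p * K (Suc m) j - K (Suc m) (pr f j)"
        proof -
          have IHj: "eps J j * y j = c j + p * K m j - K m (pr f j)" using IH j unfolding y_def by simp
          obtain Z where Z: "Z = eps J j * r_steps p f J c t0 (Suc m) j" by blast
          obtain Y where Y: "Y = eps J j * y j" by blast
          obtain A B :: int where A: "A = (if j = t then 1 else 0)" and B: "B = (if j = nx f t then 1 else 0)" by blast
          have "Z = Y - p * A + B" using e1 Z Y A B by simp
          moreover have "K m (pr f j) = K (Suc m) (pr f j) + B" using e2 B by simp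
          moreover have "K m j = K (Suc m) j + A" using Ks2[OF j] A by simp
          moreover have "Y = c j + p * K m j - K m (pr f j)" using IHj Y by simp
          ultimately have "Z = c j + p * K (Suc m) j - K (Suc m) (pr f j)" by (simp only:) (simp add: algebra_simps)
          then show ?thesis using Z by simp
        qed
      qed
    qed
  qed
  show ?thesis
  proof (intro allI impI)
    fix i assume i: "i < f"
    have "K f j = k j" for j unfolding K_def using phi_lt by simp
    moreover have "eps J i * R i = c i + p * k i - k (pr f i)" using val i eps_solve by blast
    ultimately have "eps J i * r_steps p f J c t0 f i = eps J i * R i"
      using inv[of f] i by simp
    then show "r_steps p f J c t0 f i = R i" by (rule eps_cancel)
  qed
qed


lemma expA_shift: "expA p f J' x a b - expA p f J x a b = Omega p f (\<lambda>i. s_vec a b J' x i - s_vec a b J x i) 0"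
  unfolding expA_def Omega_diff[symmetric] s_vec_def by (rule arg_cong[where f="\<lambda>g. Omega p f g 0"]) auto

lemma expB_shift: "expB p f e J' x a b - expB p f e J x a b = - Omega p f (\<lambda>i. s_vec a b J' x i - s_vec a b J x i) 0"
proof -
  have "expB p f e J' x a b - expB p f e J x a b = Omega p f (\<lambda>i. s_vec a b J x i - s_vec a b J' x i) 0"
    unfolding expB_def Omega_diff[symmetric] s_vec_def by (rule arg_cong[where f="\<lambda>g. Omega p f g 0"]) auto
  also have "\<dots> = - Omega p f (\<lambda>i. s_vec a b J' x i - s_vec a b J x i) 0"
    using Omega_diff[of p f "s_vec a b J x" "s_vec a b J' x" 0] Omega_diff[of p f "s_vec a b J' x" "s_vec a b J x" 0] by simp
  finally show ?thesis .
qed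

lemma expAB_u: "expA p f J x a b - expB p f e J x a b
   = Omega p f (\<lambda>i. eps J i * (a i - b i + 1) - (n i + int e - 1 - 2 * x i)) 0 + Omega p f n 0"
proof -
  have "expA p f J x a b - expB p f e J x a b
     = Omega p f (\<lambda>i. (eps J i * (a i - b i + 1) - (n i + int e - 1 - 2 * x i)) + n i) 0"
    unfolding expA_def expB_def Omega_diff[symmetric] eps_def by (rule arg_cong[where f="\<lambda>g. Omega p f g 0"]) auto
  then show ?thesis by (simp only: Omega_add)
qed

lemma M_pos: "2 \<le> (p::int) \<Longrightarrow> 1 \<le> f \<Longrightarrow> 0 < p ^ f - 1"
proof -
  assume p: "2 \<le> p" and f: "1 \<le> f"
  have "p ^ 1 \<le> p ^ f" using f p by (intro power_increasing) auto
  then show ?thesis using p by simp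
qed

lemma dominate:
  assumes f: "1 \<le> f" and p: "2 \<le> p"
    and Jx: "(J, x) \<in> S_set p f e k1 k2 a b" and J': "J' \<subseteq> {..<f}"
    and E: "\<forall>i<f. 0 \<le> E i"
    and D: "\<forall>i<f. s_vec a b J' x i - s_vec a b J x i = p * E i - E (pr f i)"
  shows "(J', x) \<in> S_set p f e k1 k2 a b \<and> preceq p f a b (J, x) (J', x)"
proof -
  let ?M = "p ^ f - 1"
  have Mpos: "0 < ?M" using M_pos[OF p f] .
  have OD: "Omega p f (\<lambda>i. s_vec a b J' x i - s_vec a b J x i) l = ?M * E (pr f l)" if "l < f" for l
  proof -
    have "Omega p f (\<lambda>i. s_vec a b J' x i - s_vec a b J x i) l = Omega p f (\<lambda>i. p * E i - E (pr f i)) l"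
      using D by (intro Omega_cong[OF f]) auto
    also have "\<dots> = ?M * E (pr f l)" by (rule Omega_carry[OF f that])
    finally show ?thesis .
  qed
  have f0: "0 < f" using f by simp
  from Jx have xok: "x_ok e f x" and c1: "[k1 = expA p f J x a b] (mod ?M)" and c2: "[k2 = expB p f e J x a b] (mod ?M)"
    unfolding S_set_def by auto
  have eA: "expA p f J' x a b = expA p f J x a b + ?M * E (pr f 0)" using expA_shift[of p f J' x a b J] OD[OF f0] by simp
  have eB: "expB p f e J' x a b = expB p f e J x a b - ?M * E (pr f 0)" using expB_shift[of p f e J' x a b J] OD[OF f0] by simp
  have c1': "[k1 = expA p f J' x a b] (mod ?M)"
    using c1 unfolding eA cong_iff_dvd_diff by (metis diff_diff_eq dvd_diff dvd_triv_left)
  have c2': "[k2 = expB p f e J' x a b] (mod ?M)"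
  proof -
    have "k2 - expB p f e J' x a b = (k2 - expB p f e J x a b) + ?M * E (pr f 0)" unfolding eB by simp
    then show ?thesis using c2 unfolding cong_iff_dvd_diff by (metis dvd_add dvd_triv_left)
  qed
  have S: "(J', x) \<in> S_set p f e k1 k2 a b" unfolding S_set_def using J' xok c1' c2' by auto
  have P: "preceq p f a b (J, x) (J', x)"
    unfolding preceq_def Let_def
  proof (intro allI impI)
    fix j assume j: "j < f"
    have "0 \<le> E (pr f j)" using E pr_lt[OF f] by blast
    then show "0 \<le> Omega p f (\<lambda>i. s_vec a b (fst (J', x)) (snd (J', x)) i - s_vec a b (fst (J, x)) (snd (J, x)) i) j \<and>
           ?M dvd Omega p f (\<lambda>i. s_vec a b (fst (J', x)) (snd (J', x)) i - s_vec a b (fst (J, x)) (snd (J, x)) i) j"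
      using OD[OF j] Mpos by simp
  qed
  show ?thesis using S P by blast
qed

lemma y0_range: "1 \<le> c i \<Longrightarrow> c i \<le> p - 1 \<Longrightarrow> 0 \<le> y0 p f J c i \<and> y0 p f J c i \<le> p"
  unfolding y0_def Let_def by auto



theorem proposition5p7:
  fixes p :: int and e f :: nat and k1 k2 :: int
    and n a b x c :: "nat \<Rightarrow> int" and J :: "nat set"
  assumes "prime p" and "1 \<le> f" and "1 \<le> e"
    and n_range: "\<forall>i<f. 1 \<le> n i \<and> n i \<le> p" and n_some: "\<exists>i<f. n i < p"
    and chi: "[k1 - k2 = Omega p f n 0] (mod p ^ f - 1)"
    and weakly_generic: "\<forall>i<f. int e \<le> n i \<and> n i \<le> p - int e"
    and serre: "\<forall>i<f. 0 \<le> a i - b i \<and> a i - b i \<le> p - 1"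
    and Wexp: "in_Wexp p f e k1 k2 a b"
    and S_ne: "S_set p f e k1 k2 a b \<noteq> {}"
    and Jx_in: "(J, x) \<in> S_set p f e k1 k2 a b"
    and Jx_max: "\<forall>Jx' \<in> S_set p f e k1 k2 a b. preceq p f a b (J, x) Jx' \<longrightarrow> Jx' = (J, x)"
    and c_def: "c = (\<lambda>i. n i + int e - 1 - 2 * x i)"
  shows "(\<forall>i<f. 1 \<le> c i \<and> c i \<le> p - 1)
    \<and> ((\<forall>i<f. a i - b i + 1 = r_fun p f J c i)
       \<or> (((J = {..<f} \<and> (\<forall>i<f. n i = int e \<and> x i = int e - 1))
           \<or> (J = {} \<and> (\<forall>i<f. n i = p - 1 - int e \<and> x i = 0)))
          \<and> (\<forall>i<f. a i - b i + 1 = p)))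
    \<and> (\<forall>t0 t1. t0 < f \<and> t1 < f \<and> y0 p f J c t0 = 0 \<and> y0 p f J c t1 = 0 \<longrightarrow>
         (\<forall>i<f. r_steps p f J c t0 f i = r_steps p f J c t1 f i))"
proof -
  have f: "1 \<le> f" by fact
  have p: "2 \<le> p" using assms(1) by (simp add: prime_ge_2_int)
  let ?M = "p ^ f - 1"
  have Mpos: "0 < ?M" using M_pos[OF p f] .
  define R where "R i = a i - b i + 1" for i
  have Rb: "\<forall>i<f. 1 \<le> R i \<and> R i \<le> p" using serre unfolding R_def by auto
  from Jx_in have Jsub: "J \<subseteq> {..<f}" and xok: "x_ok e f x"
    and c1: "[k1 = expA p f J x a b] (mod ?M)" and c2: "[k2 = expB p f e J x a b] (mod ?M)"
    unfolding S_set_def by auto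
  have xb: "\<forall>i<f. 0 \<le> x i \<and> x i \<le> int e - 1" using xok unfolding x_ok_def by auto
  have cb: "\<forall>i<f. 1 \<le> c i \<and> c i \<le> p - 1" using xb weakly_generic unfolding c_def by force
  define u where "u i = eps J i * R i - c i" for i
  have du: "?M dvd Omega p f u 0"
  proof -
    have "expA p f J x a b - expB p f e J x a b = Omega p f u 0 + Omega p f n 0"
      using expAB_u[of p f J x a b e n] unfolding u_def R_def c_def by simp
    moreover have d1: "?M dvd (k1 - expA p f J x a b)" and d2: "?M dvd (k2 - expB p f e J x a b)"
      and d3: "?M dvd (k1 - k2 - Omega p f n 0)"
      using c1 c2 chi unfolding cong_iff_dvd_diff by auto
    have "?M dvd ((k1 - k2 - Omega p f n 0) - (k1 - expA p f J x a b) + (k2 - expB p f e J x a b))"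
      using dvd_add[OF dvd_diff[OF d3 d1] d2] .
    moreover have "(k1 - k2 - Omega p f n 0) - (k1 - expA p f J x a b) + (k2 - expB p f e J x a b) = Omega p f u 0"
      using \<open>expA p f J x a b - expB p f e J x a b = Omega p f u 0 + Omega p f n 0\<close> by simp
    ultimately show ?thesis by simp
  qed
  obtain k where ku: "\<forall>i<f. u i = p * k i - k (pr f i)" using carry_exists[OF f p du] by blast
  have val: "\<forall>i<f. R i = eps J i * (c i + p * k i - k (pr f i))"
  proof (intro allI impI)
    fix i assume i: "i < f"
    have "eps J i * R i - c i = p * k i - k (pr f i)" using ku i unfolding u_def by blast
    then have "eps J i * R i = c i + p * k i - k (pr f i)" by linarith
    then have "eps J i * (eps J i * R i) = eps J i * (c i + p * k i - k (pr f i))" by simp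
    then show "R i = eps J i * (c i + p * k i - k (pr f i))" by (simp add: mult.assoc[symmetric] eps_sq)
  qed
  have valJ: "R i = c i + p * k i - k (pr f i)" if "i < f" "i \<in> J" for i
    using val that unfolding eps_def by simp
  have valN: "R i = - (c i + p * k i - k (pr f i))" if "i < f" "i \<notin> J" for i
    using val that unfolding eps_def by simp
  have ub: "1 - 2 * p \<le> u i \<and> u i \<le> p - 1" if "i < f" for i
    using Rb cb that unfolding u_def eps_def by force
  have prl: "pr f i < f" for i using pr_lt[OF f] .
  have kmax: "\<forall>i<f. k i \<le> 1"
  proof -
    obtain i0 where i0: "i0 < f" "\<forall>j<f. k j \<le> k i0"
    proof -
      have "0 \<in> {..<f}" using f by simp
      then have "{..<f} \<noteq> {}" by blast
      then have "Max (k ` {..<f}) \<in> k ` {..<f}" by (intro Max_in) auto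
      then obtain i0 where "i0 < f" "k i0 = Max (k ` {..<f})" by auto
      moreover have "\<forall>j<f. k j \<le> Max (k ` {..<f})" by auto
      ultimately show ?thesis using that by auto
    qed
    have "u i0 = p * k i0 - k (pr f i0)" using ku i0 by blast
    moreover have "k (pr f i0) \<le> k i0" using i0 prl by blast
    ultimately have "p * k i0 \<le> p - 1 + k i0" using ub[OF i0(1)] by linarith
    then have h: "(p - 1) * k i0 \<le> p - 1" by (simp add: algebra_simps)
    have "k i0 \<le> 1"
    proof (rule ccontr)
      assume "\<not> k i0 \<le> 1"
      then have "(p - 1) * 2 \<le> (p - 1) * k i0" using p by (intro mult_left_mono) auto
      then show False using h p by simp
    qed
    then show ?thesis using i0 by auto
  qed
  have notJ: "k i \<le> -1" if "i < f" "i \<notin> J" for i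
  proof (rule ccontr)
    assume "\<not> k i \<le> -1"
    then have "0 \<le> p * k i" using p by simp
    moreover have "1 \<le> R i" using Rb that by simp
    moreover have "k (pr f i) \<le> 1" using kmax prl by simp
    ultimately show False using valN[OF that] cb that by force
  qed
  have C1: "\<forall>i<f. 1 \<le> c i \<and> c i \<le> p - 1" by (rule cb)
  show ?thesis
  proof (cases "\<exists>i<f. k i > k0 J i")
    case True
    then obtain i1 where i1: "i1 < f" "k i1 > k0 J i1" by blast
    have P1: "i1 \<in> J \<and> 1 \<le> k i1" using i1 notJ[OF i1(1)] unfolding k0_def by (cases "i1 \<in> J") auto
    have allP: "\<forall>i<f. i \<in> J \<and> 1 \<le> k i"
    proof (rule cyc_back[where P="\<lambda>i. i \<in> J \<and> 1 \<le> k i", OF i1(1) P1])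
      fix i assume i: "i < f" and Pi: "i \<in> J \<and> 1 \<le> k i"
      have "0 \<le> p * (k i - 1)" using Pi p by simp
      then have h1: "0 \<le> p * k i - p" by (simp add: algebra_simps)
      have h2: "R i = c i + p * k i - k (pr f i)" using valJ[OF i] Pi by blast
      have h3: "R i \<le> p" "1 \<le> c i" using Rb cb i by auto
      have "1 \<le> k (pr f i)" using h1 h2 h3 by linarith
      moreover have "pr f i \<in> J" using notJ[OF prl[of i]] calculation by force
      ultimately show "pr f i \<in> J \<and> 1 \<le> k (pr f i)" by simp
    qed
    have k1s: "\<forall>i<f. k i = 1" using allP kmax by force
    have cR: "\<forall>i<f. c i = 1 \<and> R i = p"
    proof (intro allI impI)
      fix i assume i: "i < f"
      have "R i = c i + p - 1" using valJ[OF i] allP i k1s prl by simp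
      then show "c i = 1 \<and> R i = p" using Rb cb i by force
    qed
    have JJ: "J = {..<f}" using Jsub allP by auto
    have nx1: "\<forall>i<f. n i = int e \<and> x i = int e - 1"
      using cR xb weakly_generic unfolding c_def by force
    have C3: "\<forall>t0 t1. t0 < f \<and> t1 < f \<and> y0 p f J c t0 = 0 \<and> y0 p f J c t1 = 0 \<longrightarrow>
         (\<forall>i<f. r_steps p f J c t0 f i = r_steps p f J c t1 f i)"
    proof -
      have "y0 p f J c t \<noteq> 0" if "t < f" for t
      proof
        assume "y0 p f J c t = 0"
        then have "t \<notin> J" using y0_zero[of p f J c t] cb that by auto
        then show False using allP that by simp
      qed
      then show ?thesis by blast
    qed
    show ?thesis using C1 C3 JJ nx1 cR unfolding R_def by auto
  next
    case False
    then have kle: "\<forall>i<f. k i \<le> k0 J i" by force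
    show ?thesis
    proof (cases "\<exists>i<f. k i < k0 J i - 1")
      case True
      then obtain i1 where i1: "i1 < f" "k i1 < k0 J i1 - 1" by blast
      have stepQ: "k (pr f i) \<le> - p - 1" if i: "i < f" and Qi: "k i < k0 J i - 1" for i
      proof (cases "i \<in> J")
        case True
        then have "k i \<le> -2" using Qi unfolding k0_def by simp
        then have h1: "p * k i \<le> p * (-2)" using p by (intro mult_left_mono) auto
        have h2: "R i = c i + p * k i - k (pr f i)" using valJ[OF i True] .
        have h3: "1 \<le> R i" "c i \<le> p - 1" using Rb cb i by auto
        show ?thesis using h1 h2 h3 by linarith
      next
        case False
        then have "k i \<le> -3" using Qi unfolding k0_def by simp
        then have h1: "p * k i \<le> p * (-3)" using p by (intro mult_left_mono) auto
        have h2: "R i = - (c i + p * k i - k (pr f i))" using valN[OF i False] .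
        have h3: "R i \<le> p" "c i \<le> p - 1" using Rb cb i by auto
        show ?thesis using h1 h2 h3 by linarith
      qed
      have allQ: "\<forall>i<f. k i < k0 J i - 1"
      proof (rule cyc_back[where P="\<lambda>i. k i < k0 J i - 1", OF i1])
        fix i assume "i < f" "k i < k0 J i - 1"
        then have "k (pr f i) \<le> - p - 1" by (rule stepQ)
        then show "k (pr f i) < k0 J (pr f i) - 1" using p unfolding k0_def by auto
      qed
      have allle: "k i \<le> - p - 1" if "i < f" for i
      proof -
        have "k (pr f (nx f i)) \<le> - p - 1" using stepQ[OF nx_lt[OF f]] allQ nx_lt[OF f] by blast
        then show ?thesis using pr_nx[OF that] by simp
      qed
      obtain i2 where i2: "i2 < f" "\<forall>j<f. k i2 \<le> k j"
      proof -
        have "0 \<in> {..<f}" using f by simp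
        then have "{..<f} \<noteq> {}" by blast
        then have "Min (k ` {..<f}) \<in> k ` {..<f}" by (intro Min_in) auto
        then obtain i2 where "i2 < f" "k i2 = Min (k ` {..<f})" by auto
        moreover have "\<forall>j<f. Min (k ` {..<f}) \<le> k j" by auto
        ultimately show ?thesis using that by auto
      qed
      have "u i2 = p * k i2 - k (pr f i2)" using ku i2 by blast
      moreover have "k i2 \<le> k (pr f i2)" using i2 prl by blast
      ultimately have low: "1 - 2 * p \<le> (p - 1) * k i2" using ub[OF i2(1)] by (simp add: algebra_simps)
      have "(p - 1) * k i2 \<le> (p - 1) * (- p - 1)" using allle[OF i2(1)] p by (intro mult_left_mono) auto
      then have "1 - 2 * p \<le> 1 - p * p" using low by (simp add: algebra_simps)
      then have "p * p \<le> 2 * p" by simp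
      then have p2: "p = 2"
      proof -
        assume h: "p * p \<le> 2 * p"
        have "\<not> 3 \<le> p"
        proof
          assume "3 \<le> p"
          then have "3 * p \<le> p * p" using p by (intro mult_right_mono) auto
          then show False using h p by simp
        qed
        then show ?thesis using p by simp
      qed
      have km3: "k i = -3" if "i < f" for i
      proof -
        have "- 3 \<le> k i2" using low p2 by simp
        then show ?thesis using allle[OF that] i2 that p2 by force
      qed
      have J0: "J = {}"
      proof (rule ccontr)
        assume "J \<noteq> {}"
        then obtain j where j: "j \<in> J" by blast
        then have jf: "j < f" using Jsub by auto
        have "R j = c j + p * k j - k (pr f j)" using valJ[OF jf j] .
        then have "R j = c j - 3" using km3[OF jf] km3[OF prl[of j]] p2 by simp
        then show False using Rb cb jf p2 by force
      qed
      have R2: "R i = 2" if "i < f" for i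
      proof -
        have "R i = - (c i + p * k i - k (pr f i))" using valN[OF that] J0 by simp
        then show ?thesis using km3[OF that] km3[OF prl[of i]] p2 cb that by force
      qed
      have dom: "({..<f}, x) \<in> S_set p f e k1 k2 a b \<and> preceq p f a b (J, x) ({..<f}, x)"
      proof (rule dominate[OF f p Jx_in])
        show "{..<f} \<subseteq> {..<f}" by simp
        show "\<forall>i<f. 0 \<le> (\<lambda>i. 2::int) i" by simp
        show "\<forall>i<f. s_vec a b {..<f} x i - s_vec a b J x i = p * (\<lambda>i. 2::int) i - (\<lambda>i. 2::int) (pr f i)"
          using R2 J0 p2 unfolding s_vec_def R_def by simp
      qed
      then have "({..<f}, x) = (J, x)" using Jx_max by blast
      moreover have "0 \<in> {..<f}" using f by simp
      ultimately have False using J0 by simp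
      then show ?thesis by blast
    next
      case False
      then have kge: "\<forall>i<f. k0 J i - 1 \<le> k i" by force
      have kb: "\<forall>i<f. k0 J i - 1 \<le> k i \<and> k i \<le> k0 J i" using kge kle by blast
      show ?thesis
      proof (cases "\<exists>t0<f. y0 p f J c t0 = 0")
        case True
        have rs: "\<forall>i<f. r_steps p f J c t0 f i = R i" if "t0 < f" "y0 p f J c t0 = 0" for t0
          by (rule rsteps_main[OF f p cb val Rb kb that])
        have C3: "\<forall>t0 t1. t0 < f \<and> t1 < f \<and> y0 p f J c t0 = 0 \<and> y0 p f J c t1 = 0 \<longrightarrow>
           (\<forall>i<f. r_steps p f J c t0 f i = r_steps p f J c t1 f i)"
          using rs by simp
        have nn: "(\<forall>i<f. 0 < y0 p f J c i) = False" using True by force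
        have rf: "r_fun p f J c = r_steps p f J c (SOME t0. t0 < f \<and> y0 p f J c t0 = 0) f"
          unfolding r_fun_def nn if_False by (rule refl)
        have "(SOME t0. t0 < f \<and> y0 p f J c t0 = 0) < f \<and> y0 p f J c (SOME t0. t0 < f \<and> y0 p f J c t0 = 0) = 0"
          using True by (rule someI_ex)
        then have "\<forall>i<f. r_fun p f J c i = R i" using rs rf by simp
        then show ?thesis using C1 C3 unfolding R_def by simp
      next
        case False
        have yr: "0 \<le> y0 p f J c i \<and> y0 p f J c i \<le> p" if "i < f" for i
          using y0_range[of c i p f J] cb that by blast
        have ypos: "\<forall>i<f. 0 < y0 p f J c i"
        proof (intro allI impI)
          fix i assume i: "i < f"
          then have "y0 p f J c i \<noteq> 0" using False by blast
          then show "0 < y0 p f J c i" using yr[OF i] by linarith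
        qed
        have ypl: "\<forall>i<f. y0 p f J c i \<le> p" using yr by blast
        have rf: "r_fun p f J c = y0 p f J c" unfolding r_fun_def using ypos by simp
        have C3: "\<forall>t0 t1. t0 < f \<and> t1 < f \<and> y0 p f J c t0 = 0 \<and> y0 p f J c t1 = 0 \<longrightarrow>
           (\<forall>i<f. r_steps p f J c t0 f i = r_steps p f J c t1 f i)"
          using False by blast
        show ?thesis
        proof (cases "\<exists>t<f. k t = k0 J t")
          case True
          then obtain t where t: "t < f" "k t = k0 J t" by blast
          have allk: "\<forall>i<f. k i = k0 J i"
          proof (rule cyc_fwd[where P="\<lambda>i. k i = k0 J i", OF t])
            fix i assume i: "i < f" and Pi: "k i = k0 J i"
            define j where "j = nx f i"
            have jf: "j < f" unfolding j_def using nx_lt[OF f] .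
            have pj: "pr f j = i" unfolding j_def using pr_nx[OF i] .
            have Rj: "R j = eps J j * (c j + p * k j - k0 J i)" using val jf pj Pi by simp
            have Yj: "y0 p f J c j = eps J j * (c j + p * k0 J j - k0 J i)" using y0_formula[OF jf] pj by simp
            show "k (nx f i) = k0 J (nx f i)"
            proof (rule ccontr)
              assume "k (nx f i) \<noteq> k0 J (nx f i)"
              then have "k j = k0 J j - 1" using kb jf unfolding j_def by force
              then have "R j = eps J j * (c j + p * (k0 J j - 1) - k0 J i)" using Rj by simp
              then have "R j = y0 p f J c j - eps J j * p" using Yj unfolding eps_def
                by (cases "j \<in> J") (simp_all add: algebra_simps)
              moreover have "1 \<le> R j" "R j \<le> p" "0 < y0 p f J c j" "y0 p f J c j \<le> p"
                using Rb ypos ypl jf by auto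
              ultimately show False unfolding eps_def by (cases "j \<in> J") simp_all
            qed
          qed
          have "\<forall>i<f. R i = y0 p f J c i"
          proof (intro allI impI)
            fix i assume i: "i < f"
            show "R i = y0 p f J c i" using val y0_formula[OF i] allk i prl by simp
          qed
          then show ?thesis using C1 C3 rf unfolding R_def by simp
        next
          case False
          then have kdev: "\<forall>i<f. k i = k0 J i - 1" using kb by force
          show ?thesis
          proof (cases "J = {}")
            case True
            have cR: "c i = p - 2 \<and> R i = p" if i: "i < f" for i
            proof -
              have "R i = - (c i + p * k i - k (pr f i))" using valN[OF i] True by simp
              then have "R i = 2 * p - 2 - c i" using kdev i prl True unfolding k0_def by simp
              moreover have "y0 p f J c i = p - 1 - c i" unfolding y0_def Let_def using True by simp
              ultimately show ?thesis using ypos Rb cb i by force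
            qed
            have nx2: "\<forall>i<f. n i = p - 1 - int e \<and> x i = 0"
            proof (intro allI impI)
              fix i assume i: "i < f"
              have h: "n i + int e - 1 - 2 * x i = p - 2" using cR[OF i] unfolding c_def by simp
              have "n i \<le> p - int e" "0 \<le> x i" using weakly_generic xb i by auto
              then show "n i = p - 1 - int e \<and> x i = 0" using h by presburger
            qed
            have "\<forall>i<f. a i - b i + 1 = p" using cR unfolding R_def by simp
            then show ?thesis using C1 C3 True nx2 by simp
          next
            case False
            then obtain j where j: "j \<in> J" by blast
            then have jf: "j < f" using Jsub by auto
            define pj where "pj = pr f j"
            have pjf: "pj < f" unfolding pj_def using prl .
            have kj: "k j = -1" using kdev jf j unfolding k0_def by simp
            have Rj0: "R j = c j - p - k pj" using valJ[OF jf j] kj unfolding pj_def by simp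
            have kpj: "k pj \<le> -2" using Rj0 Rb cb jf by force
            have pjJ: "pj \<notin> J" using kpj kdev pjf unfolding k0_def by force
            have kpj2: "k pj = -2" using kdev pjf pjJ unfolding k0_def by simp
            have Rj: "R j = 1" using Rj0 kpj2 Rb cb jf by force
            have Rpj: "R pj = p"
            proof -
              have e: "R pj = 2 * p - c pj + k (pr f pj)"
                using valN[OF pjf pjJ] kpj2 by (simp add: algebra_simps)
              show ?thesis
              proof (cases "pr f pj \<in> J")
                case True
                then have "k (pr f pj) = -1" using kdev prl unfolding k0_def by simp
                then show ?thesis using e Rb cb pjf by force
              next
                case False
                then have "k (pr f pj) = -2" using kdev prl unfolding k0_def by simp
                moreover have "y0 p f J c pj = p - 1 - c pj" unfolding y0_def Let_def
                  using pjJ False unfolding pr_def by simp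
                ultimately show ?thesis using e Rb cb pjf ypos by force
              qed
            qed
            have pjj: "pj \<noteq> j" using pjJ j by blast
            have prj: "pr f i = pj \<longleftrightarrow> i = j" if "i < f" for i
              using nx_pr[OF that] nx_pr[OF jf] unfolding pj_def by metis
            define J' where "J' = insert pj (J - {j})"
            define E where "E i = (if i = pj then (1::int) else 0)" for i
            have dom: "(J', x) \<in> S_set p f e k1 k2 a b \<and> preceq p f a b (J, x) (J', x)"
            proof (rule dominate[OF f p Jx_in])
              show "J' \<subseteq> {..<f}" unfolding J'_def using Jsub pjf by auto
              show "\<forall>i<f. 0 \<le> E i" unfolding E_def by simp
              show "\<forall>i<f. s_vec a b J' x i - s_vec a b J x i = p * E i - E (pr f i)"
              proof (intro allI impI)
                fix i assume i: "i < f"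
                show "s_vec a b J' x i - s_vec a b J x i = p * E i - E (pr f i)"
                proof (cases "i = pj")
                  case True
                  then show ?thesis using Rpj pjJ prj[OF i] pjj unfolding s_vec_def J'_def E_def R_def by simp
                next
                  case False
                  note F1 = False
                  show ?thesis
                  proof (cases "i = j")
                    case True
                    then show ?thesis using Rj j F1 prj[OF i] unfolding s_vec_def J'_def E_def R_def by simp
                  next
                    case False
                    then show ?thesis using F1 prj[OF i] unfolding s_vec_def J'_def E_def by simp
                  qed
                qed
              qed
            qed
            then have "(J', x) = (J, x)" using Jx_max by blast
            then have "pj \<in> J" unfolding J'_def by blast
            then show ?thesis using pjJ by blast
          qed
        qed
      qed
    qed
  qed
qed


end
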